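(* Let $g\colon(0,1)\to\mathbb{R}$ be a continuous, strictly increasing function such that $g(1-a)=-g(a)$ for all $a\in(0,1)$ and $\lim_{a\to0^+}g(a)=-\infty$. Extend $g$ by $g(0)=-\infty$, $g(1)=\infty$, and extend $g^{-1}\colon\mathbb{R}\to(0,1)$ by $g^{-1}(-\infty)=0$, $g^{-1}(\infty)=1$. Then the function \[ J(a,b)=g^{-1}\bigl(g(a)-g(b)\bigr),\qquad (a,b)\in[0,1]^2\setminus\{(0,0),(1,1)\}, \] is an involutive Jamesian function.
   Context: Let $D=[0,1]^2\setminus\{(0,0),(1,1)\}$. A function $J\colon D\to\mathbb{R}$ is called Jamesian if it satisfies, for all $(a,b)\in D$: (a) $J(a,\tfrac12)=a$; (b) $J(a,0)=1$ for $0<a\le 1$; (c) $J(b,a)=1-J(a,b)$; (d) $J(1-b,1-a)=J(a,b)$; (e) $J(a,b)$ is a non-decreasing function of $a$ for each $0\le b\le 1$ and a strictly increasing function of $a$ for each $0<b<1$. A Jamesian function is called involutive if in addition $J(a,J(a,b))=b$ whenever $0<a<1$ and $0\le b\le 1$. In the formula for $J$, the conventions $-\infty-\infty=-\infty$, $\infty-(-\infty)=\infty$, $t\pm\infty=\pm\infty$ and $\pm\infty - t=\pm\infty$ for real $t$ are used. *)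

theory Defs
  imports "HOL-Analysis.Analysis" "HOL-Library.Extended_Real"
begin

definition jamesD :: "(real \<times> real) set" where
  "jamesD = {(a, b). 0 \<le> a \<and> a \<le> 1 \<and> 0 \<le> b \<and> b \<le> 1} - {(0, 0), (1, 1)}"

definition jamesian :: "(real \<Rightarrow> real \<Rightarrow> real) \<Rightarrow> bool" where
  "jamesian J \<longleftrightarrow>
     (\<forall>a. 0 \<le> a \<and> a \<le> 1 \<longrightarrow> J a (1/2) = a) \<and>
     (\<forall>a. 0 < a \<and> a \<le> 1 \<longrightarrow> J a 0 = 1) \<and>
     (\<forall>(a, b) \<in> jamesD. J b a = 1 - J a b) \<and>
     (\<forall>(a, b) \<in> jamesD. J (1 - b) (1 - a) = J a b) \<and>
     (\<forall>b. 0 \<le> b \<and> b \<le> 1 \<longrightarrow> mono_on {a. (a, b) \<in> jamesD} (\<lambda>a. J a b)) \<and>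
     (\<forall>b. 0 < b \<and> b < 1 \<longrightarrow> strict_mono_on {a. (a, b) \<in> jamesD} (\<lambda>a. J a b))"

definition involutive_jamesian :: "(real \<Rightarrow> real \<Rightarrow> real) \<Rightarrow> bool" where
  "involutive_jamesian J \<longleftrightarrow> jamesian J \<and>
     (\<forall>a b. 0 < a \<and> a < 1 \<and> 0 \<le> b \<and> b \<le> 1 \<longrightarrow> J a (J a b) = b)"

definition gext :: "(real \<Rightarrow> real) \<Rightarrow> real \<Rightarrow> ereal" where
  "gext g a = (if a = 0 then -\<infinity> else if a = 1 then \<infinity> else ereal (g a))"

definition ginv :: "(real \<Rightarrow> real) \<Rightarrow> ereal \<Rightarrow> real" where
  "ginv g x = (if x = -\<infinity> then 0 else if x = \<infinity> then 1
               else (THE a. 0 < a \<and> a < 1 \<and> g a = real_of_ereal x))"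

end

theory Submission
  imports Defs
begin

locale gfun =
  fixes g :: "real \<Rightarrow> real"
  assumes cont: "continuous_on {0<..<1} g"
    and sm: "strict_mono_on {0<..<1} g"
    and sym: "\<forall>a\<in>{0<..<1}. g (1 - a) = - g a"
    and lim: "filterlim g at_bot (at_right 0)"
begin

lemma g_half: "g (1/2) = 0" using sym[rule_format, of "1/2"] by simp

lemma less_iff: "a \<in> {0<..<1} \<Longrightarrow> b \<in> {0<..<1} \<Longrightarrow> g a < g b \<longleftrightarrow> a < b"
  using strict_mono_on_less[OF sm] by blast

lemma eq_iff: "a \<in> {0<..<1} \<Longrightarrow> b \<in> {0<..<1} \<Longrightarrow> g a = g b \<longleftrightarrow> a = b"
  using less_iff by (metis linorder_neqE_linordered_idom order_less_irrefl)

lemma small: "\<exists>a. 0 < a \<and> a \<le> 1/2 \<and> g a \<le> Z"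
proof -
  from lim have "eventually (\<lambda>x. g x \<le> Z) (at_right 0)"
    by (simp add: filterlim_at_bot)
  then obtain b where b: "b > 0" "\<And>y. y > 0 \<Longrightarrow> y < b \<Longrightarrow> g y \<le> Z"
    unfolding eventually_at_right_field by auto
  show ?thesis by (rule exI[of _ "min (b/2) (1/2)"]) (use b in auto)
qed

lemma surj: "\<exists>t\<in>{0<..<1}. g t = y"
proof -
  obtain a where a: "0 < a" "a \<le> 1/2" "g a \<le> y" using small by blast
  obtain c where c: "0 < c" "c \<le> 1/2" "g c \<le> -y" using small by blast
  have "g (1 - c) = - g c" using sym c by auto
  hence c2: "y \<le> g (1 - c)" using c by simp
  have "continuous_on {a..1-c} g"
    by (rule continuous_on_subset[OF cont]) (use a c in auto)
  then obtain x where "a \<le> x" "x \<le> 1 - c" "g x = y"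
    using IVT'[of g a y "1-c"] a c c2 by auto
  thus ?thesis using a c by (intro bexI[of _ x]) auto
qed

lemma ginv_fin: "0 < t \<Longrightarrow> t < 1 \<Longrightarrow> ginv g (ereal (g t)) = t"
  unfolding ginv_def by (auto intro!: the_equality simp: eq_iff)

lemma ginv_ereal: "ginv g (ereal y) \<in> {0<..<1} \<and> g (ginv g (ereal y)) = y"
proof -
  obtain t where t: "t \<in> {0<..<1}" "g t = y" using surj by blast
  thus ?thesis using ginv_fin[of t] by auto
qed

lemma gext_ginv: "gext g (ginv g x) = x"
proof (cases x)
  case (real r)
  thus ?thesis using ginv_ereal[of r] by (auto simp: gext_def)
qed (auto simp: gext_def ginv_def)

lemma ginv_gext: "0 \<le> a \<Longrightarrow> a \<le> 1 \<Longrightarrow> ginv g (gext g a) = a"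
  by (auto simp: gext_def ginv_def[of g "-\<infinity>"] ginv_def[of g "\<infinity>"] ginv_fin)

lemma ginv_neg: "ginv g (-x) = 1 - ginv g x"
proof (cases x)
  case (real r)
  define t where "t = ginv g (ereal r)"
  have t: "t \<in> {0<..<1}" "g t = r" using ginv_ereal[of r] t_def by auto
  have "g (1 - t) = - r" using sym t by auto
  hence "ginv g (ereal (-r)) = 1 - t" using ginv_fin[of "1-t"] t by auto
  thus ?thesis using real t_def by simp
qed (auto simp: ginv_def)

lemma gr: "0 < ginv g (ereal y)" using ginv_ereal[of y] by auto
lemma lt: "ginv g (ereal y) < 1" using ginv_ereal[of y] by auto

lemma ginv_strict: "x < y \<Longrightarrow> ginv g x < ginv g y"
proof (cases x; cases y)
  fix r s assume "x < y" "x = ereal r" "y = ereal s"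
  thus ?thesis using ginv_ereal[of r] ginv_ereal[of s] less_iff by force
qed (auto simp: ginv_def[of g "-\<infinity>"] ginv_def[of g "\<infinity>"] gr lt)

lemma gext_strict: "0 \<le> a \<Longrightarrow> a < b \<Longrightarrow> b \<le> 1 \<Longrightarrow> gext g a < gext g b"
  by (auto simp: gext_def less_iff)

end

theorem theorem5p3:
  fixes g :: "real \<Rightarrow> real"
  assumes "continuous_on {0<..<1} g"
    and "strict_mono_on {0<..<1} g"
    and "\<forall>a\<in>{0<..<1}. g (1 - a) = - g a"
    and "filterlim g at_bot (at_right 0)"
  shows "involutive_jamesian (\<lambda>a b. ginv g (gext g a - gext g b))"
proof -
  interpret gfun g using assms by unfold_locales
  let ?G = "gext g"
  have D: "(a, b) \<in> jamesD \<longleftrightarrow> 0 \<le> a \<and> a \<le> 1 \<and> 0 \<le> b \<and> b \<le> 1 \<and> \<not>(a = 0 \<and> b = 0) \<and> \<not>(a = 1 \<and> b = 1)" for a b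
    by (auto simp: jamesD_def)
  have half: "?G (1/2) = 0" by (simp add: gext_def g_half zero_ereal_def)
  have c: "?G b - ?G a = -(?G a - ?G b)" if "(a, b) \<in> jamesD" for a b
    using that unfolding D gext_def by auto
  have symd: "g (1 - a) = - g a" if "0 < a" "a < 1" for a using assms(3) that by auto
  have d: "?G (1 - b) - ?G (1 - a) = ?G a - ?G b" if "(a, b) \<in> jamesD" for a b
    using that unfolding D gext_def by (auto simp: symd)
  have strict: "ginv g (?G a1 - ?G b) < ginv g (?G a2 - ?G b)"
    if "0 < b" "b < 1" "0 \<le> a1" "a1 < a2" "a2 \<le> 1" for a1 a2 b
  proof -
    have "?G a1 < ?G a2" using gext_strict that by auto
    moreover have "?G b = ereal (g b)" using that by (simp add: gext_def)
    ultimately have "?G a1 - ?G b < ?G a2 - ?G b"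
      by (cases "?G a1"; cases "?G a2") auto
    thus ?thesis by (rule ginv_strict)
  qed
  have J1: "jamesian (\<lambda>a b. ginv g (gext g a - gext g b))"
    unfolding jamesian_def
  proof (intro conjI allI impI ballI)
    fix a :: real assume "0 \<le> a \<and> a \<le> 1"
    thus "ginv g (?G a - ?G (1/2)) = a" using half ginv_gext by simp
  next
    fix a :: real assume "0 < a \<and> a \<le> 1"
    hence "?G a - ?G 0 = \<infinity>" by (auto simp: gext_def)
    thus "ginv g (?G a - ?G 0) = 1" by (simp add: ginv_def)
  next
    fix p assume "p \<in> jamesD"
    then obtain a b where p: "p = (a, b)" "(a, b) \<in> jamesD" by (cases p) auto
    show "case p of (a, b) \<Rightarrow> ginv g (?G b - ?G a) = 1 - ginv g (?G a - ?G b)"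
      using p c[OF p(2)] ginv_neg by simp
  next
    fix p assume "p \<in> jamesD"
    then obtain a b where p: "p = (a, b)" "(a, b) \<in> jamesD" by (cases p) auto
    show "case p of (a, b) \<Rightarrow> ginv g (?G (1 - b) - ?G (1 - a)) = ginv g (?G a - ?G b)"
      using p d[OF p(2)] by simp
  next
    fix b :: real assume b: "0 \<le> b \<and> b \<le> 1"
    show "mono_on {a. (a, b) \<in> jamesD} (\<lambda>a. ginv g (?G a - ?G b))"
    proof (intro mono_onI)
      fix r s assume rs: "r \<in> {a. (a, b) \<in> jamesD}" "s \<in> {a. (a, b) \<in> jamesD}" "r \<le> s"
      show "ginv g (?G r - ?G b) \<le> ginv g (?G s - ?G b)"
      proof (cases "b = 0 \<or> b = 1")
        case True
        thus ?thesis using rs unfolding D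
          by (auto simp: gext_def ginv_def[of g "-\<infinity>"] ginv_def[of g "\<infinity>"])
      next
        case False
        thus ?thesis using rs strict[of b r s] b unfolding D
          by (cases "r = s") auto
      qed
    qed
  next
    fix b :: real assume b: "0 < b \<and> b < 1"
    show "strict_mono_on {a. (a, b) \<in> jamesD} (\<lambda>a. ginv g (?G a - ?G b))"
      by (intro strict_mono_onI) (use b strict in \<open>auto simp: D\<close>)
  qed
  have J2: "ginv g (?G a - ?G (ginv g (?G a - ?G b))) = b"
    if "0 < a" "a < 1" "0 \<le> b" "b \<le> 1" for a b
  proof -
    have "?G a = ereal (g a)" using that by (simp add: gext_def)
    hence "?G a - (?G a - ?G b) = ?G b" by (cases "?G b") auto
    thus ?thesis using gext_ginv ginv_gext that by simp
  qed
  show ?thesis unfolding involutive_jamesian_def using J1 J2 by blast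
qed

end
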